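(* Let $v$ be a typical weight and let $X$ be a reflexive initial space such that for every $f\in X$ and $0\le r<1$ the function $f_r(z)=f(rz)$ is in $X$ and $\sup_{0\le r<1}\|f_r\|_X\le C\|f\|_X$ for a constant $C$ independent of $f$. Let $T$ be an intrinsic operator on $\mathcal{H}(\mathbb{D})$. (a) If $Tf_r\in H_{v,0}$ for all $f\in X$, $0\le r<1$, then $T:X\to H_v$ is bounded if and only if $T:X\to H_{v,0}$ is bounded. (b) If $Tf_r\in\mathcal{B}_{v,0}$ for all $f\in X$, $0\le r<1$, then $T:X\to\mathcal{B}_v$ is bounded if and only if $T:X\to\mathcal{B}_{v,0}$ is bounded.
   Context: $\mathcal{H}(\mathbb{D})$ is the space of holomorphic functions on the unit disk $\mathbb{D}$ with the topology $\tau_{uc}$ of uniform convergence on compact subsets. A linear operator $T$ on $\mathcal{H}(\mathbb{D})$ is intrinsic if it maps $\tau_{uc}$-convergent sequences to $\tau_{uc}$-convergent sequences. An initial space is a Banach space $X\subset\mathcal{H}(\mathbb{D})$ containing the polynomials such that every sequence in the closed unit ball of $X$ has a subsequence converging in $\tau_{uc}$ to some function in $X$. A typical weight is a continuous radial $v:\mathbb{D}\to(0,1]$, non-increasing in $|z|$, with $v(z)\to0$ as $|z|\to1$. $H_v=\{f:\sup_zv(z)|f(z)|<\infty\}$ (norm that supremum), $\mathcal{B}_v=\{f:\sup_zv(z)|f'(z)|<\infty\}$ (norm $|f(0)|+\sup_zv(z)|f'(z)|$), and $H_{v,0}$, $\mathcal{B}_{v,0}$ the subspaces where $v(z)|f(z)|\to0$,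 resp. $v(z)|f'(z)|\to0$, as $|z|\to1$. *)

theory Defs
  imports "HOL-Analysis.Analysis" "HOL-Computational_Algebra.Polynomial"
begin

text \<open>Elements of H(D) are represented canonically as functions complex => complex
  that are holomorphic on the unit disk and vanish outside it.\<close>

definition disk :: "complex set" where "disk = ball 0 1"

definition restr :: "(complex \<Rightarrow> complex) \<Rightarrow> complex \<Rightarrow> complex" where
  "restr f = (\<lambda>z. if z \<in> disk then f z else 0)"

definition HD :: "(complex \<Rightarrow> complex) set" where
  "HD = {f. f holomorphic_on disk \<and> (\<forall>z. z \<notin> disk \<longrightarrow> f z = 0)}"

definition dil :: "real \<Rightarrow> (complex \<Rightarrow> complex) \<Rightarrow> complex \<Rightarrow> complex" where
  "dil r f = restr (\<lambda>z. f (of_real r * z))"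

definition uc_conv :: "(nat \<Rightarrow> complex \<Rightarrow> complex) \<Rightarrow> (complex \<Rightarrow> complex) \<Rightarrow> bool" where
  "uc_conv F f \<longleftrightarrow> (\<forall>K. compact K \<and> K \<subseteq> disk \<longrightarrow> uniform_limit K F f sequentially)"

definition intrinsic :: "((complex \<Rightarrow> complex) \<Rightarrow> complex \<Rightarrow> complex) \<Rightarrow> bool" where
  "intrinsic T \<longleftrightarrow>
     (\<forall>f\<in>HD. T f \<in> HD) \<and>
     (\<forall>f\<in>HD. \<forall>g\<in>HD. T (\<lambda>z. f z + g z) = (\<lambda>z. T f z + T g z)) \<and>
     (\<forall>c. \<forall>f\<in>HD. T (\<lambda>z. c * f z) = (\<lambda>z. c * T f z)) \<and>
     (\<forall>F f. (\<forall>n. F n \<in> HD) \<and> f \<in> HD \<and> uc_conv F f \<longrightarrow>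
        (\<exists>g\<in>HD. uc_conv (\<lambda>n. T (F n)) g))"

definition banach_subspace :: "(complex \<Rightarrow> complex) set \<Rightarrow> ((complex \<Rightarrow> complex) \<Rightarrow> real) \<Rightarrow> bool" where
  "banach_subspace X nX \<longleftrightarrow>
     X \<subseteq> HD \<and> (\<lambda>z. 0) \<in> X \<and>
     (\<forall>f\<in>X. \<forall>g\<in>X. (\<lambda>z. f z + g z) \<in> X) \<and>
     (\<forall>c. \<forall>f\<in>X. (\<lambda>z. c * f z) \<in> X) \<and>
     (\<forall>f\<in>X. 0 \<le> nX f) \<and>
     (\<forall>f\<in>X. nX f = 0 \<longleftrightarrow> f = (\<lambda>z. 0)) \<and>
     (\<forall>c. \<forall>f\<in>X. nX (\<lambda>z. c * f z) = norm c * nX f) \<and>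
     (\<forall>f\<in>X. \<forall>g\<in>X. nX (\<lambda>z. f z + g z) \<le> nX f + nX g) \<and>
     (\<forall>F. (\<forall>n. F n \<in> X) \<and>
          (\<forall>e>0. \<exists>N. \<forall>m\<ge>N. \<forall>n\<ge>N. nX (\<lambda>z. F m z - F n z) < e) \<longrightarrow>
          (\<exists>f\<in>X. (\<lambda>n. nX (\<lambda>z. F n z - f z)) \<longlonglongrightarrow> 0))"

definition initial_space :: "(complex \<Rightarrow> complex) set \<Rightarrow> ((complex \<Rightarrow> complex) \<Rightarrow> real) \<Rightarrow> bool" where
  "initial_space X nX \<longleftrightarrow>
     banach_subspace X nX \<and>
     (\<forall>p :: complex poly. restr (poly p) \<in> X) \<and>
     (\<forall>F. (\<forall>n. F n \<in> X \<and> nX (F n) \<le> 1) \<longrightarrow>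
        (\<exists>(\<sigma>::nat \<Rightarrow> nat) f. strict_mono \<sigma> \<and> f \<in> X \<and> uc_conv (F \<circ> \<sigma>) f))"

definition dual_sp :: "(complex \<Rightarrow> complex) set \<Rightarrow> ((complex \<Rightarrow> complex) \<Rightarrow> real)
     \<Rightarrow> ((complex \<Rightarrow> complex) \<Rightarrow> complex) set" where
  "dual_sp X nX = {\<phi>.
     (\<forall>f\<in>X. \<forall>g\<in>X. \<phi> (\<lambda>z. f z + g z) = \<phi> f + \<phi> g) \<and>
     (\<forall>c. \<forall>f\<in>X. \<phi> (\<lambda>z. c * f z) = c * \<phi> f) \<and>
     (\<exists>K. \<forall>f\<in>X. norm (\<phi> f) \<le> K * nX f)}"

definition dual_norm :: "(complex \<Rightarrow> complex) set \<Rightarrow> ((complex \<Rightarrow> complex) \<Rightarrow> real)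
     \<Rightarrow> ((complex \<Rightarrow> complex) \<Rightarrow> complex) \<Rightarrow> real" where
  "dual_norm X nX \<phi> = (SUP f\<in>{f\<in>X. nX f \<le> 1}. norm (\<phi> f))"

definition bidual_sp :: "(complex \<Rightarrow> complex) set \<Rightarrow> ((complex \<Rightarrow> complex) \<Rightarrow> real)
     \<Rightarrow> (((complex \<Rightarrow> complex) \<Rightarrow> complex) \<Rightarrow> complex) set" where
  "bidual_sp X nX = {\<Phi>.
     (\<forall>\<phi>\<in>dual_sp X nX. \<forall>\<psi>\<in>dual_sp X nX. \<Phi> (\<lambda>f. \<phi> f + \<psi> f) = \<Phi> \<phi> + \<Phi> \<psi>) \<and>
     (\<forall>c. \<forall>\<phi>\<in>dual_sp X nX. \<Phi> (\<lambda>f. c * \<phi> f) = c * \<Phi> \<phi>) \<and>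
     (\<exists>K. \<forall>\<phi>\<in>dual_sp X nX. norm (\<Phi> \<phi>) \<le> K * dual_norm X nX \<phi>)}"

definition reflexive_sp :: "(complex \<Rightarrow> complex) set \<Rightarrow> ((complex \<Rightarrow> complex) \<Rightarrow> real) \<Rightarrow> bool" where
  "reflexive_sp X nX \<longleftrightarrow>
     (\<forall>\<Phi>\<in>bidual_sp X nX. \<exists>x\<in>X. \<forall>\<phi>\<in>dual_sp X nX. \<Phi> \<phi> = \<phi> x)"

definition typical_weight :: "(complex \<Rightarrow> real) \<Rightarrow> bool" where
  "typical_weight v \<longleftrightarrow>
     continuous_on disk v \<and>
     (\<forall>z\<in>disk. 0 < v z \<and> v z \<le> 1) \<and>
     (\<forall>z\<in>disk. \<forall>w\<in>disk. norm z = norm w \<longrightarrow> v z = v w) \<and>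
     (\<forall>z\<in>disk. \<forall>w\<in>disk. norm z \<le> norm w \<longrightarrow> v w \<le> v z) \<and>
     (v \<longlongrightarrow> 0) (filtercomap norm (at_left 1))"

definition Hv :: "(complex \<Rightarrow> real) \<Rightarrow> (complex \<Rightarrow> complex) set" where
  "Hv v = {f\<in>HD. bounded ((\<lambda>z. v z * norm (f z)) ` disk)}"

definition Hv_norm :: "(complex \<Rightarrow> real) \<Rightarrow> (complex \<Rightarrow> complex) \<Rightarrow> real" where
  "Hv_norm v f = (SUP z\<in>disk. v z * norm (f z))"

definition Hv0 :: "(complex \<Rightarrow> real) \<Rightarrow> (complex \<Rightarrow> complex) set" where
  "Hv0 v = {f\<in>HD. ((\<lambda>z. v z * norm (f z)) \<longlongrightarrow> 0) (filtercomap norm (at_left 1))}"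

definition Bv :: "(complex \<Rightarrow> real) \<Rightarrow> (complex \<Rightarrow> complex) set" where
  "Bv v = {f\<in>HD. bounded ((\<lambda>z. v z * norm (deriv f z)) ` disk)}"

definition Bv_norm :: "(complex \<Rightarrow> real) \<Rightarrow> (complex \<Rightarrow> complex) \<Rightarrow> real" where
  "Bv_norm v f = norm (f 0) + (SUP z\<in>disk. v z * norm (deriv f z))"

definition Bv0 :: "(complex \<Rightarrow> real) \<Rightarrow> (complex \<Rightarrow> complex) set" where
  "Bv0 v = {f\<in>HD. ((\<lambda>z. v z * norm (deriv f z)) \<longlongrightarrow> 0) (filtercomap norm (at_left 1))}"

definition bounded_op :: "(complex \<Rightarrow> complex) set \<Rightarrow> ((complex \<Rightarrow> complex) \<Rightarrow> real)
     \<Rightarrow> ((complex \<Rightarrow> complex) \<Rightarrow> complex \<Rightarrow> complex)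
     \<Rightarrow> (complex \<Rightarrow> complex) set \<Rightarrow> ((complex \<Rightarrow> complex) \<Rightarrow> real) \<Rightarrow> bool" where
  "bounded_op X nX T Y nY \<longleftrightarrow>
     (\<forall>f\<in>X. T f \<in> Y) \<and> (\<exists>C. \<forall>f\<in>X. nY (T f) \<le> C * nX f)"

end

theory Submission
  imports Defs "HOL-Complex_Analysis.Complex_Analysis"
begin

definition ultra :: "'a filter \<Rightarrow> bool" where
  "ultra F \<longleftrightarrow> F \<noteq> bot \<and> (\<forall>P. eventually P F \<or> eventually (\<lambda>x. \<not> P x) F)"

lemma ultra_of_max:
  assumes "F \<noteq> bot"
  assumes max: "\<And>G. G \<noteq> bot \<Longrightarrow> G \<le> F \<Longrightarrow> F = G"
  shows "ultra F"
  unfolding ultra_def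
proof (intro conjI allI assms(1))
  fix P
  show "eventually P F \<or> (\<forall>\<^sub>Fx in F. \<not> P x)"
  proof (rule disjCI)
    assume "\<not> (\<forall>\<^sub>Fx in F. \<not> P x)"
    then have "inf F (principal {x. P x}) \<noteq> bot"
      by (simp add: trivial_limit_def eventually_inf_principal not_eventually)
    then have F: "F = inf F (principal {x. P x})"
      by (rule max) simp
    show "eventually P F"
      by (subst F) (simp add: eventually_inf_principal)
  qed
qed

lemma ex_ultra:
  fixes F :: "'a filter"
  assumes F: "F \<noteq> bot"
  shows "\<exists>U\<le>F. ultra U"
proof -
  let ?X = "{G. G \<noteq> bot \<and> G \<le> F}"
  let ?R = "{(b, a). a \<noteq> bot \<and> a \<le> b \<and> b \<le> F}"
  have bot_notin_R: "c \<in> Chains ?R \<Longrightarrow> bot \<notin> c" for c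
    by (auto simp: Chains_def)
  have [simp]: "Field ?R = ?X"
    by (auto simp: Field_def bot_unique)
  have "\<exists>m\<in>Field ?R. \<forall>a\<in>Field ?R. (m, a) \<in> ?R \<longrightarrow> a = m" (is "\<exists>m\<in>?A. ?B m")
  proof (rule Zorns_po_lemma)
    show "Partial_order ?R"
      by (auto simp: partial_order_on_def preorder_on_def
          antisym_def refl_on_def trans_def Field_def bot_unique)
    show "\<exists>u\<in>Field ?R. \<forall>a\<in>C. (a, u) \<in> ?R" if C: "C \<in> Chains ?R" for C
    proof (simp, intro exI conjI ballI)
      have Inf_C: "Inf C \<noteq> bot" "Inf C \<le> F" if "C \<noteq> {}"
      proof -
        from C that have "Inf C = bot \<longleftrightarrow> (\<exists>x\<in>C. x = bot)"
          unfolding trivial_limit_def by (intro eventually_Inf_base) (auto simp: Chains_def)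
        with C show "Inf C \<noteq> bot"
          by (simp add: bot_notin_R)
        from that obtain x where "x \<in> C" by auto
        with C show "Inf C \<le> F"
          by (auto intro!: Inf_lower2[of x] simp: Chains_def)
      qed
      then have [simp]: "inf F (Inf C) = (if C = {} then F else Inf C)"
        using C by (auto simp add: inf_absorb2)
      from C show "inf F (Inf C) \<noteq> bot"
        by (simp add: F Inf_C)
      from C show "inf F (Inf C) \<le> F"
        by (simp add: Chains_def Inf_C F)
      with C show "inf F (Inf C) \<le> x" "x \<le> F" if "x \<in> C" for x
        using that  by (auto intro: Inf_lower simp: Chains_def)
    qed
  qed
  then obtain U where U: "U \<in> ?A" "?B U" ..
  show ?thesis
  proof
    from U show "U \<le> F \<and> ultra U"
      by (auto intro!: ultra_of_max)
  qed
qed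

lemma ultra_lim:
  fixes h :: "'a \<Rightarrow> complex"
  assumes U: "ultra U" and B: "\<And>x. norm (h x) \<le> B"
  shows "(h \<longlongrightarrow> Lim U h) U"
proof -
  have nb: "U \<noteq> bot" using U unfolding ultra_def by auto
  have fm: "filtermap h U \<noteq> bot" using nb by (simp add: filtermap_bot_iff)
  have ev: "eventually (\<lambda>x. x \<in> cball 0 B) (filtermap h U)"
    using B by (simp add: eventually_filtermap)
  obtain l where l: "inf (nhds l) (filtermap h U) \<noteq> bot"
    using compact_filter[THEN iffD1, OF compact_cball, rule_format, OF fm ev] by blast
  have "(h \<longlongrightarrow> l) U"
  proof (rule topological_tendstoI)
    fix S assume S: "open S" "l \<in> S"
    show "eventually (\<lambda>x. h x \<in> S) U"
    proof (rule ccontr)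
      assume "\<not> eventually (\<lambda>x. h x \<in> S) U"
      then have "eventually (\<lambda>x. h x \<notin> S) U" using U unfolding ultra_def by blast
      then have e1: "eventually (\<lambda>y. y \<notin> S) (filtermap h U)" by (simp add: eventually_filtermap)
      have e2: "eventually (\<lambda>y. y \<in> S) (nhds l)" using S by (rule eventually_nhds_in_open)
      have "eventually (\<lambda>y. False) (inf (nhds l) (filtermap h U))"
        using eventually_inf[THEN iffD2, OF exI[of _ "\<lambda>y. y \<in> S"], OF exI[of _ "\<lambda>y. y \<notin> S"]] e1 e2
        by (auto elim: eventually_mono)
      then show False using l by (simp add: trivial_limit_def)
    qed
  qed
  moreover have "Lim U h = l" using tendsto_Lim nb calculation by blast
  ultimately show ?thesis by simp
qed

lemma bs_facts:
  assumes "banach_subspace X nX"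
  shows "X \<subseteq> HD" "(\<lambda>z. 0) \<in> X" "\<And>c f. f \<in> X \<Longrightarrow> (\<lambda>z. c * f z) \<in> X"
    "\<And>f. f \<in> X \<Longrightarrow> 0 \<le> nX f" "\<And>f. f \<in> X \<Longrightarrow> nX f = 0 \<longleftrightarrow> f = (\<lambda>z. 0)"
    "\<And>c f. f \<in> X \<Longrightarrow> nX (\<lambda>z. c * f z) = norm c * nX f"
  using assms unfolding banach_subspace_def by auto

lemma dual_norm_nonneg:
  assumes bs: "banach_subspace X nX" and phi: "\<phi> \<in> dual_sp X nX"
  shows "0 \<le> dual_norm X nX \<phi>"
proof -
  obtain K where K: "\<forall>f\<in>X. norm (\<phi> f) \<le> K * nX f" using phi unfolding dual_sp_def by auto
  have bdd: "bdd_above ((\<lambda>f. norm (\<phi> f)) ` {f\<in>X. nX f \<le> 1})"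
  proof (rule bdd_aboveI2)
    fix f assume f: "f \<in> {f\<in>X. nX f \<le> 1}"
    then have "norm (\<phi> f) \<le> K * nX f" using K by auto
    also have "\<dots> \<le> \<bar>K\<bar> * nX f" using f bs_facts(4)[OF bs, of f]
      by (intro mult_right_mono) auto
    also have "\<dots> \<le> \<bar>K\<bar>" using f bs_facts(4)[OF bs, of f]
      by (intro mult_left_le) auto
    finally show "norm (\<phi> f) \<le> \<bar>K\<bar>" .
  qed
  have n0: "nX (\<lambda>z. 0) = 0" using bs_facts(5)[OF bs bs_facts(2)[OF bs]] by simp
  have z: "(\<lambda>z. 0) \<in> {f\<in>X. nX f \<le> 1}" using bs_facts(2)[OF bs] n0 by simp
  have "0 \<le> norm (\<phi> (\<lambda>z. 0))" by simp
  also have "\<dots> \<le> dual_norm X nX \<phi>" unfolding dual_norm_def by (rule cSUP_upper[OF z bdd])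
  finally show ?thesis .
qed

lemma dual_bound:
  assumes bs: "banach_subspace X nX" and phi: "\<phi> \<in> dual_sp X nX" and g: "g \<in> X"
  shows "norm (\<phi> g) \<le> dual_norm X nX \<phi> * nX g"
proof -
  obtain K where K: "\<forall>f\<in>X. norm (\<phi> f) \<le> K * nX f" using phi unfolding dual_sp_def by auto
  have sc: "\<And>c f. f \<in> X \<Longrightarrow> \<phi> (\<lambda>z. c * f z) = c * \<phi> f" using phi unfolding dual_sp_def by auto
  have bdd: "bdd_above ((\<lambda>f. norm (\<phi> f)) ` {f\<in>X. nX f \<le> 1})"
  proof (rule bdd_aboveI2)
    fix f assume f: "f \<in> {f\<in>X. nX f \<le> 1}"
    then have "norm (\<phi> f) \<le> K * nX f" using K by auto
    also have "\<dots> \<le> \<bar>K\<bar> * nX f" using f bs_facts(4)[OF bs, of f]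
      by (intro mult_right_mono) auto
    also have "\<dots> \<le> \<bar>K\<bar>" using f bs_facts(4)[OF bs, of f]
      by (intro mult_left_le) auto
    finally show "norm (\<phi> f) \<le> \<bar>K\<bar>" .
  qed
  show ?thesis
  proof (cases "nX g = 0")
    case True
    then have "g = (\<lambda>z. 0)" using bs_facts(5)[OF bs g] by simp
    then have "\<phi> g = \<phi> (\<lambda>z. 0 * g z)" by simp
    also have "\<dots> = 0" using sc[OF g, of 0] by simp
    finally show ?thesis using True by simp
  next
    case False
    then have pos: "nX g > 0" using bs_facts(4)[OF bs g] by simp
    define h where "h = (\<lambda>z. complex_of_real (1 / nX g) * g z)"
    have hX: "h \<in> X" unfolding h_def using bs_facts(3)[OF bs g] .
    have "nX h = norm (complex_of_real (1 / nX g)) * nX g" unfolding h_def by (rule bs_facts(6)[OF bs g])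
    then have nh: "nX h = 1" using pos by (simp add: norm_divide)
    have "norm (\<phi> h) \<le> dual_norm X nX \<phi>" unfolding dual_norm_def
      by (rule cSUP_upper[OF _ bdd]) (use hX nh in auto)
    moreover have "\<phi> h = complex_of_real (1 / nX g) * \<phi> g" unfolding h_def by (rule sc[OF g])
    ultimately have "norm (\<phi> g) / nX g \<le> dual_norm X nX \<phi>" using pos
      by (simp add: norm_mult norm_divide)
    then show ?thesis using pos by (simp add: divide_le_eq mult.commute)
  qed
qed

lemma point_eval_dual:
  assumes ini: "initial_space X nX" and z: "z \<in> disk"
  shows "(\<lambda>g. g z) \<in> dual_sp X nX"
proof -
  have bs: "banach_subspace X nX" using ini unfolding initial_space_def by auto
  have cpt: "\<And>F. (\<forall>n. F n \<in> X \<and> nX (F n) \<le> 1) \<Longrightarrow>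
        (\<exists>(\<sigma>::nat \<Rightarrow> nat) f. strict_mono \<sigma> \<and> f \<in> X \<and> uc_conv (F \<circ> \<sigma>) f)"
    using ini unfolding initial_space_def by blast
  have "\<exists>K. \<forall>g\<in>X. norm (g z) \<le> K * nX g"
  proof (rule ccontr)
    assume nK: "\<not> ?thesis"
    have "\<forall>n::nat. \<exists>g. g \<in> X \<and> norm (g z) > real n * nX g"
      using nK by (force simp: not_le)
    from choice[OF this] obtain G where G0: "\<forall>n. G n \<in> X \<and> norm (G n z) > real n * nX (G n)"
      by blast
    then have G: "\<And>n. G n \<in> X" "\<And>n. norm (G n z) > real n * nX (G n)" by auto
    have pos: "nX (G n) > 0" for n
    proof -
      have "nX (G n) \<noteq> 0"
      proof
        assume "nX (G n) = 0"
        then have "G n = (\<lambda>z. 0)" using bs_facts(5)[OF bs G(1)] by simp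
        then show False using G(2)[of n] \<open>nX (G n) = 0\<close> by simp
      qed
      then show ?thesis using bs_facts(4)[OF bs G(1)[of n]] by simp
    qed
    define F where "F n = (\<lambda>w. complex_of_real (1 / nX (G n)) * G n w)" for n
    have FX: "F n \<in> X" for n unfolding F_def using bs_facts(3)[OF bs G(1)] .
    have nF: "nX (F n) = 1" for n
    proof -
      have "nX (F n) = norm (complex_of_real (1 / nX (G n))) * nX (G n)"
        unfolding F_def by (rule bs_facts(6)[OF bs G(1)])
      then show ?thesis using pos[of n] by (simp add: norm_divide)
    qed
    have Fz: "norm (F n z) > real n" for n
      using G(2)[of n] pos[of n] by (simp add: F_def norm_mult norm_divide pos_less_divide_eq)
    obtain \<sigma> f where sf: "strict_mono \<sigma>" "f \<in> X" "uc_conv (F \<circ> \<sigma>) f"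
      using cpt[of F] FX nF by auto
    have "uniform_limit {z} (F \<circ> \<sigma>) f sequentially"
    proof -
      have "compact {z} \<and> {z} \<subseteq> disk" using z by simp
      then show ?thesis using sf(3) unfolding uc_conv_def by blast
    qed
    then have lim: "((\<lambda>n. (F \<circ> \<sigma>) n z) \<longlongrightarrow> f z) sequentially"
      by (rule tendsto_uniform_limitI) simp
    then have "eventually (\<lambda>n. dist ((F \<circ> \<sigma>) n z) (f z) < 1) sequentially"
      by (rule tendstoD) simp
    moreover have "eventually (\<lambda>n. real n > norm (f z) + 1) sequentially"
    proof -
      obtain N where N: "norm (f z) + 1 < real N" using reals_Archimedean2 by blast
      show ?thesis unfolding eventually_at_top_linorder
        by (rule exI[of _ N]) (use N in auto)
    qed
    ultimately have "eventually (\<lambda>n. dist ((F \<circ> \<sigma>) n z) (f z) < 1 \<and> real n > norm (f z) + 1) sequentially"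
      by (rule eventually_conj)
    then obtain n where n: "dist ((F \<circ> \<sigma>) n z) (f z) < 1" "real n > norm (f z) + 1"
      using eventually_sequentially by auto
    have "real n \<le> real (\<sigma> n)" using seq_suble[OF sf(1)] by simp
    then have "norm (F (\<sigma> n) z) > norm (f z) + 1" using Fz[of "\<sigma> n"] n(2) by simp
    moreover have "norm (F (\<sigma> n) z) \<le> norm (f z) + dist (F (\<sigma> n) z) (f z)"
      using norm_triangle_ineq[of "f z" "F (\<sigma> n) z - f z"] by (simp add: dist_norm)
    ultimately show False using n(1) by simp
  qed
  then show ?thesis unfolding dual_sp_def by simp
qed

lemma refl_key:
  assumes ini: "initial_space X nX" and refl: "reflexive_sp X nX" and fX: "f \<in> X"
    and dX: "\<forall>r. 0 \<le> r \<and> r < 1 \<longrightarrow> dil r f \<in> X"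
    and dN: "\<forall>r. 0 \<le> r \<and> r < 1 \<longrightarrow> nX (dil r f) \<le> C * nX f"
    and psi: "\<psi> \<in> dual_sp X nX"
    and zero: "\<forall>r. 0 \<le> r \<and> r < 1 \<longrightarrow> \<psi> (dil r f) = 0"
  shows "\<psi> f = 0"
proof -
  have bs: "banach_subspace X nX" using ini unfolding initial_space_def by auto
  have "at_left (1::real) \<noteq> bot" by simp
  then obtain U where UL: "U \<le> at_left (1::real)" and U: "ultra U" using ex_ultra by blast
  have Unb: "U \<noteq> bot" using U unfolding ultra_def by auto
  have Cpos: "0 \<le> C * nX f"
  proof -
    have "0 \<le> nX (dil 0 f)" using bs_facts(4)[OF bs] dX by simp
    also have "\<dots> \<le> C * nX f" using dN by simp
    finally show ?thesis .
  qed
  define H where "H \<phi> = (\<lambda>r::real. if 0 \<le> r \<and> r < 1 then \<phi> (dil r f) else 0)"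
    for \<phi> :: "(complex \<Rightarrow> complex) \<Rightarrow> complex"
  define \<Phi> where "\<Phi> \<phi> = Lim U (H \<phi>)" for \<phi>
  have Hb: "norm (H \<phi> r) \<le> dual_norm X nX \<phi> * (C * nX f)" if phi: "\<phi> \<in> dual_sp X nX" for \<phi> r
  proof (cases "0 \<le> r \<and> r < 1")
    case True
    then have "norm (H \<phi> r) \<le> dual_norm X nX \<phi> * nX (dil r f)"
      unfolding H_def using dual_bound[OF bs phi] dX by simp
    also have "\<dots> \<le> dual_norm X nX \<phi> * (C * nX f)"
      using dN True dual_norm_nonneg[OF bs phi] by (intro mult_left_mono) auto
    finally show ?thesis .
  next
    case False
    then have "H \<phi> r = 0" unfolding H_def by (intro if_not_P)
    then show ?thesis using dual_norm_nonneg[OF bs phi] Cpos by simp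
  qed
  have conv: "(H \<phi> \<longlongrightarrow> \<Phi> \<phi>) U" if phi: "\<phi> \<in> dual_sp X nX" for \<phi>
    unfolding \<Phi>_def by (rule ultra_lim[OF U Hb[OF phi]])
  have bid: "\<Phi> \<in> bidual_sp X nX"
    unfolding bidual_sp_def
  proof (intro CollectI conjI ballI allI)
    fix \<phi> \<rho> assume a: "\<phi> \<in> dual_sp X nX" "\<rho> \<in> dual_sp X nX"
    have "H (\<lambda>g. \<phi> g + \<rho> g) = (\<lambda>r. H \<phi> r + H \<rho> r)" unfolding H_def by auto
    moreover have "((\<lambda>r. H \<phi> r + H \<rho> r) \<longlongrightarrow> \<Phi> \<phi> + \<Phi> \<rho>) U"
      by (intro tendsto_add conv a)
    ultimately show "\<Phi> (\<lambda>g. \<phi> g + \<rho> g) = \<Phi> \<phi> + \<Phi> \<rho>"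
      unfolding \<Phi>_def[of "\<lambda>g. \<phi> g + \<rho> g"] using tendsto_Lim Unb by (metis)
  next
    fix c \<phi> assume a: "\<phi> \<in> dual_sp X nX"
    have "H (\<lambda>g. c * \<phi> g) = (\<lambda>r. c * H \<phi> r)" unfolding H_def by auto
    moreover have "((\<lambda>r. c * H \<phi> r) \<longlongrightarrow> c * \<Phi> \<phi>) U"
      by (intro tendsto_mult_left conv a)
    ultimately show "\<Phi> (\<lambda>g. c * \<phi> g) = c * \<Phi> \<phi>"
      unfolding \<Phi>_def[of "\<lambda>g. c * \<phi> g"] using tendsto_Lim Unb by (metis)
  next
    show "\<exists>K. \<forall>\<phi>\<in>dual_sp X nX. norm (\<Phi> \<phi>) \<le> K * dual_norm X nX \<phi>"
    proof (intro exI ballI)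
      fix \<phi> assume a: "\<phi> \<in> dual_sp X nX"
      have "norm (\<Phi> \<phi>) \<le> dual_norm X nX \<phi> * (C * nX f)"
        using Lim_norm_ubound[OF _ conv[OF a]] Unb Hb[OF a] by simp
      then show "norm (\<Phi> \<phi>) \<le> (C * nX f) * dual_norm X nX \<phi>" by (simp add: mult.commute)
    qed
  qed
  obtain x where xX: "x \<in> X" and xe: "\<forall>\<phi>\<in>dual_sp X nX. \<Phi> \<phi> = \<phi> x"
    using refl bid unfolding reflexive_sp_def by blast
  have HD: "x \<in> HD" "f \<in> HD" using bs_facts(1)[OF bs] xX fX by auto
  have xf: "x = f"
  proof
    fix z
    show "x z = f z"
    proof (cases "z \<in> disk")
      case False
      then show ?thesis using HD unfolding HD_def by auto
    next
      case True
      have d: "(\<lambda>g. g z) \<in> dual_sp X nX" by (rule point_eval_dual[OF ini True])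
      have cont: "isCont f z"
      proof -
        have "f holomorphic_on disk" using HD unfolding HD_def by auto
        then have "continuous_on disk f" by (rule holomorphic_on_imp_continuous_on)
        then show ?thesis using True continuous_on_eq_continuous_at[of disk f]
          unfolding disk_def by auto
      qed
      have t1: "((\<lambda>r::real. complex_of_real r * z) \<longlongrightarrow> complex_of_real 1 * z) (at_left 1)"
        by (intro tendsto_intros)
      have t2: "((\<lambda>r::real. f (complex_of_real r * z)) \<longlongrightarrow> f z) (at_left 1)"
        using isCont_tendsto_compose[OF _ t1, of f] cont by simp
      have ev: "eventually (\<lambda>r. r \<in> {0<..<1}) (at_left (1::real))"
        by (rule eventually_at_left_real) simp
      have t3: "(H (\<lambda>g. g z) \<longlongrightarrow> f z) (at_left 1)"
      proof (rule Lim_transform_eventually[OF t2])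
        show "\<forall>\<^sub>F r in at_left 1. f (complex_of_real r * z) = H (\<lambda>g. g z) r"
          using ev by eventually_elim (use True in \<open>auto simp: H_def dil_def restr_def\<close>)
      qed
      have "\<Phi> (\<lambda>g. g z) = f z"
        using tendsto_Lim[OF _ tendsto_mono[OF UL t3]] Unb unfolding \<Phi>_def by simp
      then show ?thesis using xe d by simp
    qed
  qed
  have "H \<psi> = (\<lambda>r. 0)" unfolding H_def using zero by auto
  then have "\<Phi> \<psi> = 0" unfolding \<Phi>_def using tendsto_Lim[OF _ tendsto_const] Unb by simp
  then show ?thesis using xe psi xf by simp
qed

lemma ev_disk: "eventually (\<lambda>z. z \<in> disk) (filtercomap norm (at_left 1))"
proof -
  have "eventually (\<lambda>y. y \<in> {0<..<1}) (at_left (1::real))"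
    by (rule eventually_at_left_real) simp
  then show ?thesis unfolding eventually_filtercomap disk_def
    by (intro exI[of _ "\<lambda>y. y \<in> {0<..<1}"]) (auto simp: dist_norm)
qed

lemma bdry_key:
  fixes L :: "(complex \<Rightarrow> complex) \<Rightarrow> complex \<Rightarrow> complex"
  assumes ini: "initial_space X nX" and refl: "reflexive_sp X nX" and fX: "f \<in> X"
    and dX: "\<forall>r. 0 \<le> r \<and> r < 1 \<longrightarrow> dil r f \<in> X"
    and dN: "\<forall>r. 0 \<le> r \<and> r < 1 \<longrightarrow> nX (dil r f) \<le> C * nX f"
    and ladd: "\<forall>g1\<in>X. \<forall>g2\<in>X. \<forall>z\<in>disk. L (\<lambda>w. g1 w + g2 w) z = L g1 z + L g2 z"
    and lsc: "\<forall>c. \<forall>g\<in>X. \<forall>z\<in>disk. L (\<lambda>w. c * g w) z = c * L g z"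
    and bnd: "\<exists>K. \<forall>g\<in>X. \<forall>z\<in>disk. norm (L g z) \<le> K * nX g"
    and dil0: "\<forall>r. 0 \<le> r \<and> r < 1 \<longrightarrow> (L (dil r f) \<longlongrightarrow> 0) (filtercomap norm (at_left 1))"
  shows "(L f \<longlongrightarrow> 0) (filtercomap norm (at_left 1))"
proof (rule ccontr)
  let ?G = "filtercomap norm (at_left (1::real))"
  assume nt: "\<not> ?thesis"
  then obtain e where e: "e > 0" "\<not> eventually (\<lambda>z. dist (L f z) 0 < e) ?G"
    unfolding tendsto_iff by blast
  let ?F = "inf ?G (principal {z. e \<le> norm (L f z)})"
  have Fnb: "?F \<noteq> bot"
  proof
    assume "?F = bot"
    then have "eventually (\<lambda>z. False) ?F" by simp
    then have "eventually (\<lambda>z. z \<in> {z. e \<le> norm (L f z)} \<longrightarrow> False) ?G"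
      unfolding eventually_inf_principal by simp
    then have "eventually (\<lambda>z. dist (L f z) 0 < e) ?G"
      by (rule eventually_mono) auto
    then show False using e(2) by simp
  qed
  obtain W where WF: "W \<le> ?F" and W: "ultra W" using ex_ultra[OF Fnb] by blast
  have Wnb: "W \<noteq> bot" using W unfolding ultra_def by auto
  have WG: "W \<le> ?G" using WF by (meson inf_le1 order_trans)
  have Wd: "eventually (\<lambda>z. z \<in> disk) W" using filter_leD[OF WG ev_disk] .
  have We: "eventually (\<lambda>z. e \<le> norm (L f z)) W"
  proof -
    have "eventually (\<lambda>z. e \<le> norm (L f z)) ?F"
      unfolding eventually_inf_principal by simp
    then show ?thesis using filter_leD[OF WF] by blast
  qed
  obtain K where K: "\<forall>g\<in>X. \<forall>z\<in>disk. norm (L g z) \<le> K * nX g" using bnd by blast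
  have z0: "(0::complex) \<in> disk" unfolding disk_def by simp
  define M where "M g = (\<lambda>z. if z \<in> disk then L g z else 0)" for g
  define \<psi> where "\<psi> g = Lim W (M g)" for g
  have Mb: "norm (M g z) \<le> K * nX g" if g: "g \<in> X" for g z
  proof (cases "z \<in> disk")
    case True then show ?thesis using K g by (simp add: M_def)
  next
    case False
    have "0 \<le> norm (L g 0)" by simp
    also have "\<dots> \<le> K * nX g" using K g z0 by blast
    finally show ?thesis using False by (simp add: M_def)
  qed
  have conv: "(M g \<longlongrightarrow> \<psi> g) W" if g: "g \<in> X" for g
    unfolding \<psi>_def by (rule ultra_lim[OF W Mb[OF g]])
  have bs: "banach_subspace X nX" using ini unfolding initial_space_def by auto
  have Xadd: "\<forall>g1\<in>X. \<forall>g2\<in>X. (\<lambda>z. g1 z + g2 z) \<in> X" using bs unfolding banach_subspace_def by auto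
  have psi: "\<psi> \<in> dual_sp X nX"
    unfolding dual_sp_def
  proof (intro CollectI conjI ballI allI)
    fix g1 g2 assume a: "g1 \<in> X" "g2 \<in> X"
    have "M (\<lambda>z. g1 z + g2 z) = (\<lambda>z. M g1 z + M g2 z)" unfolding M_def using ladd a by auto
    moreover have "((\<lambda>z. M g1 z + M g2 z) \<longlongrightarrow> \<psi> g1 + \<psi> g2) W"
      by (intro tendsto_add conv a)
    ultimately show "\<psi> (\<lambda>z. g1 z + g2 z) = \<psi> g1 + \<psi> g2"
      unfolding \<psi>_def[of "\<lambda>z. g1 z + g2 z"] using tendsto_Lim Wnb by metis
  next
    fix c g assume a: "g \<in> X"
    have "M (\<lambda>z. c * g z) = (\<lambda>z. c * M g z)" unfolding M_def using lsc a by auto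
    moreover have "((\<lambda>z. c * M g z) \<longlongrightarrow> c * \<psi> g) W"
      by (intro tendsto_mult_left conv a)
    ultimately show "\<psi> (\<lambda>z. c * g z) = c * \<psi> g"
      unfolding \<psi>_def[of "\<lambda>z. c * g z"] using tendsto_Lim Wnb by metis
  next
    show "\<exists>K. \<forall>g\<in>X. norm (\<psi> g) \<le> K * nX g"
    proof (intro exI ballI)
      fix g assume a: "g \<in> X"
      show "norm (\<psi> g) \<le> K * nX g"
        using Lim_norm_ubound[OF _ conv[OF a]] Wnb Mb[OF a] by simp
    qed
  qed
  have zero: "\<forall>r. 0 \<le> r \<and> r < 1 \<longrightarrow> \<psi> (dil r f) = 0"
  proof (intro allI impI)
    fix r :: real assume r: "0 \<le> r \<and> r < 1"
    have "(M (dil r f) \<longlongrightarrow> 0) ?G"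
    proof (rule Lim_transform_eventually[OF dil0[rule_format, OF r]])
      show "\<forall>\<^sub>F z in ?G. L (dil r f) z = M (dil r f) z"
        using ev_disk by (rule eventually_mono) (simp add: M_def)
    qed
    then have "(M (dil r f) \<longlongrightarrow> 0) W" by (rule tendsto_mono[OF WG])
    then show "\<psi> (dil r f) = 0" unfolding \<psi>_def using tendsto_Lim Wnb by blast
  qed
  have "\<psi> f = 0" by (rule refl_key[OF ini refl fX dX dN psi zero])
  moreover have "e \<le> norm (\<psi> f)"
  proof (rule Lim_norm_lbound[OF _ conv[OF fX]])
    show "\<not> trivial_limit W" using Wnb by simp
    show "\<forall>\<^sub>F z in W. e \<le> norm (M f z)"
      using Wd We by eventually_elim (simp add: M_def)
  qed
  ultimately show False using e(1) by simp
qed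

lemma bdd_of_lim0:
  fixes g :: "complex \<Rightarrow> real"
  assumes cont: "continuous_on disk g" and lim: "(g \<longlongrightarrow> 0) (filtercomap norm (at_left 1))"
  shows "bounded (g ` disk)"
proof -
  have "eventually (\<lambda>z. dist (g z) 0 < 1) (filtercomap norm (at_left 1))"
    using lim by (rule tendstoD) simp
  then obtain Q where Q: "eventually Q (at_left (1::real))" "\<forall>z. Q (norm z) \<longrightarrow> dist (g z) 0 < 1"
    unfolding eventually_filtercomap by blast
  obtain b where b: "b < 1" "\<forall>y>b. y < 1 \<longrightarrow> Q y"
    using Q(1) eventually_at_left[of 0 "1::real" Q] by auto
  define b' where "b' = max b 0"
  have b': "b' < 1" "0 \<le> b'" using b(1) unfolding b'_def by auto
  have sub: "cball 0 b' \<subseteq> disk" using b' unfolding disk_def by auto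
  have "compact (g ` cball 0 b')"
    by (rule compact_continuous_image[OF continuous_on_subset[OF cont sub] compact_cball])
  then have "bounded (g ` cball 0 b')" by (rule compact_imp_bounded)
  then obtain M where M: "\<forall>x\<in>g ` cball 0 b'. norm x \<le> M"
    unfolding bounded_iff by blast
  show ?thesis unfolding bounded_iff
  proof (intro exI[of _ "max M 1"] ballI)
    fix y assume "y \<in> g ` disk"
    then obtain z where z: "z \<in> disk" "y = g z" by auto
    show "norm y \<le> max M 1"
    proof (cases "norm z \<le> b'")
      case True
      then have "z \<in> cball 0 b'" by simp
      then have "norm (g z) \<le> M" using M by blast
      then show ?thesis using z by simp
    next
      case False
      then have "norm z > b" "norm z < 1" using z(1) unfolding b'_def disk_def by auto
      then have "dist (g z) 0 < 1" using b(2) Q(2) by blast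
      then show ?thesis using z by simp
    qed
  qed
qed

lemma tw_facts:
  assumes "typical_weight v"
  shows "continuous_on disk v" "\<And>z. z \<in> disk \<Longrightarrow> 0 < v z"
proof -
  have i: "continuous_on disk v \<and> (\<forall>z\<in>disk. 0 < v z \<and> v z \<le> 1)"
    using assms unfolding typical_weight_def by blast
  show "continuous_on disk v" using i by blast
  show "\<And>z. z \<in> disk \<Longrightarrow> 0 < v z" using i by blast
qed

lemma HD_cont:
  assumes "f \<in> HD" shows "continuous_on disk f" "continuous_on disk (deriv f)"
    "\<And>z. z \<in> disk \<Longrightarrow> f field_differentiable (at z)"
proof -
  have h: "f holomorphic_on disk" using assms unfolding HD_def by auto
  have o: "open disk" unfolding disk_def by simp
  show "continuous_on disk f" using h by (rule holomorphic_on_imp_continuous_on)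
  show "continuous_on disk (deriv f)" using holomorphic_deriv[OF h o]
    by (rule holomorphic_on_imp_continuous_on)
  show "\<And>z. z \<in> disk \<Longrightarrow> f field_differentiable (at z)"
    using holomorphic_on_imp_differentiable_at[OF h o] .
qed

lemma Hv0_sub:
  assumes tw: "typical_weight v" and f: "f \<in> Hv0 v" shows "f \<in> Hv v"
proof -
  have fH: "f \<in> HD" using f unfolding Hv0_def by blast
  have "continuous_on disk (\<lambda>z. v z * norm (f z))"
    by (rule continuous_on_mult[OF tw_facts(1)[OF tw] continuous_on_norm[OF HD_cont(1)[OF fH]]])
  then have "bounded ((\<lambda>z. v z * norm (f z)) ` disk)"
    by (rule bdd_of_lim0) (use f in \<open>unfold Hv0_def, blast\<close>)
  then show ?thesis using fH unfolding Hv_def by blast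
qed

lemma Bv0_sub:
  assumes tw: "typical_weight v" and f: "f \<in> Bv0 v" shows "f \<in> Bv v"
proof -
  have fH: "f \<in> HD" using f unfolding Bv0_def by blast
  have "continuous_on disk (\<lambda>z. v z * norm (deriv f z))"
    by (rule continuous_on_mult[OF tw_facts(1)[OF tw] continuous_on_norm[OF HD_cont(2)[OF fH]]])
  then have "bounded ((\<lambda>z. v z * norm (deriv f z)) ` disk)"
    by (rule bdd_of_lim0) (use f in \<open>unfold Bv0_def, blast\<close>)
  then show ?thesis using fH unfolding Bv_def by blast
qed

lemma conv_norm:
  assumes tw: "typical_weight v"
  shows "((\<lambda>z. complex_of_real (v z) * h z) \<longlongrightarrow> 0) (filtercomap norm (at_left 1)) \<longleftrightarrow>
         ((\<lambda>z. v z * norm (h z)) \<longlongrightarrow> 0) (filtercomap norm (at_left 1))"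
proof -
  have "((\<lambda>z. complex_of_real (v z) * h z) \<longlongrightarrow> 0) (filtercomap norm (at_left 1)) \<longleftrightarrow>
        ((\<lambda>z. norm (complex_of_real (v z) * h z)) \<longlongrightarrow> 0) (filtercomap norm (at_left 1))"
    by (rule tendsto_norm_zero_iff[symmetric])
  also have "\<dots> \<longleftrightarrow> ((\<lambda>z. v z * norm (h z)) \<longlongrightarrow> 0) (filtercomap norm (at_left 1))"
  proof (rule tendsto_cong)
    show "\<forall>\<^sub>F z in filtercomap norm (at_left 1). norm (complex_of_real (v z) * h z) = v z * norm (h z)"
      using ev_disk
    proof (rule eventually_mono)
      fix z assume "z \<in> disk"
      then have "0 < v z" by (rule tw_facts(2)[OF tw])
      then show "norm (complex_of_real (v z) * h z) = v z * norm (h z)" by (simp add: norm_mult)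
    qed
  qed
  finally show ?thesis .
qed

lemma intr_facts:
  assumes "intrinsic T"
  shows "\<And>f. f \<in> HD \<Longrightarrow> T f \<in> HD"
    "\<And>f g. f \<in> HD \<Longrightarrow> g \<in> HD \<Longrightarrow> T (\<lambda>z. f z + g z) = (\<lambda>z. T f z + T g z)"
    "\<And>c f. f \<in> HD \<Longrightarrow> T (\<lambda>z. c * f z) = (\<lambda>z. c * T f z)"
proof -
  have i: "(\<forall>f\<in>HD. T f \<in> HD) \<and>
     (\<forall>f\<in>HD. \<forall>g\<in>HD. T (\<lambda>z. f z + g z) = (\<lambda>z. T f z + T g z)) \<and>
     (\<forall>c. \<forall>f\<in>HD. T (\<lambda>z. c * f z) = (\<lambda>z. c * T f z))"
    using assms unfolding intrinsic_def by blast
  show "\<And>f. f \<in> HD \<Longrightarrow> T f \<in> HD" using i by blast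
  show "\<And>f g. f \<in> HD \<Longrightarrow> g \<in> HD \<Longrightarrow> T (\<lambda>z. f z + g z) = (\<lambda>z. T f z + T g z)" using i by blast
  show "\<And>c f. f \<in> HD \<Longrightarrow> T (\<lambda>z. c * f z) = (\<lambda>z. c * T f z)" using i by blast
qed

lemma hv_bound:
  assumes "h \<in> Hv v" "z \<in> disk" shows "v z * norm (h z) \<le> Hv_norm v h"
proof -
  have "bounded ((\<lambda>z. v z * norm (h z)) ` disk)" using assms(1) unfolding Hv_def by blast
  then have "bdd_above ((\<lambda>z. v z * norm (h z)) ` disk)" by (rule bounded_imp_bdd_above)
  then show ?thesis unfolding Hv_norm_def by (rule cSUP_upper[OF assms(2)])
qed

lemma bv_bound:
  assumes "h \<in> Bv v" "z \<in> disk" shows "v z * norm (deriv h z) \<le> Bv_norm v h"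
proof -
  have "bounded ((\<lambda>z. v z * norm (deriv h z)) ` disk)" using assms(1) unfolding Bv_def by blast
  then have "bdd_above ((\<lambda>z. v z * norm (deriv h z)) ` disk)" by (rule bounded_imp_bdd_above)
  then have "v z * norm (deriv h z) \<le> (SUP z\<in>disk. v z * norm (deriv h z))"
    by (rule cSUP_upper[OF assms(2)])
  then show ?thesis unfolding Bv_norm_def by (smt (verit) norm_ge_zero)
qed

theorem corollary3p2:
  fixes v :: "complex \<Rightarrow> real"
    and X :: "(complex \<Rightarrow> complex) set"
    and nX :: "(complex \<Rightarrow> complex) \<Rightarrow> real"
    and T :: "(complex \<Rightarrow> complex) \<Rightarrow> complex \<Rightarrow> complex"
    and C :: real
  assumes "typical_weight v"
    and "initial_space X nX"
    and "reflexive_sp X nX"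
    and "\<forall>f\<in>X. \<forall>r::real. 0 \<le> r \<and> r < 1 \<longrightarrow> dil r f \<in> X"
    and "\<forall>f\<in>X. \<forall>r::real. 0 \<le> r \<and> r < 1 \<longrightarrow> nX (dil r f) \<le> C * nX f"
    and "intrinsic T"
  shows "((\<forall>f\<in>X. \<forall>r::real. 0 \<le> r \<and> r < 1 \<longrightarrow> T (dil r f) \<in> Hv0 v) \<longrightarrow>
            (bounded_op X nX T (Hv v) (Hv_norm v) \<longleftrightarrow> bounded_op X nX T (Hv0 v) (Hv_norm v)))
       \<and> ((\<forall>f\<in>X. \<forall>r::real. 0 \<le> r \<and> r < 1 \<longrightarrow> T (dil r f) \<in> Bv0 v) \<longrightarrow>
            (bounded_op X nX T (Bv v) (Bv_norm v) \<longleftrightarrow> bounded_op X nX T (Bv0 v) (Bv_norm v)))"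
proof -
  note tw = assms(1) and ini = assms(2) and refl = assms(3) and intr = assms(6)
  have bs: "banach_subspace X nX" using ini unfolding initial_space_def by blast
  have XH: "\<And>g. g \<in> X \<Longrightarrow> g \<in> HD" using bs_facts(1)[OF bs] by blast
  have dX: "\<forall>r. 0 \<le> r \<and> r < 1 \<longrightarrow> dil r f \<in> X" if "f \<in> X" for f using assms(4) that by blast
  have dN: "\<forall>r. 0 \<le> r \<and> r < 1 \<longrightarrow> nX (dil r f) \<le> C * nX f" if "f \<in> X" for f using assms(5) that by blast
  have TH: "\<And>g. g \<in> X \<Longrightarrow> T g \<in> HD" using intr_facts(1)[OF intr] XH by blast
  have Tadd: "\<And>g1 g2. g1 \<in> X \<Longrightarrow> g2 \<in> X \<Longrightarrow> T (\<lambda>z. g1 z + g2 z) = (\<lambda>z. T g1 z + T g2 z)"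
    using intr_facts(2)[OF intr] XH by blast
  have Tsc: "\<And>c g. g \<in> X \<Longrightarrow> T (\<lambda>z. c * g z) = (\<lambda>z. c * T g z)"
    using intr_facts(3)[OF intr] XH by blast
  have partA: "bounded_op X nX T (Hv v) (Hv_norm v) \<longleftrightarrow> bounded_op X nX T (Hv0 v) (Hv_norm v)"
    if hyp: "\<forall>f\<in>X. \<forall>r::real. 0 \<le> r \<and> r < 1 \<longrightarrow> T (dil r f) \<in> Hv0 v"
  proof
    assume bo: "bounded_op X nX T (Hv v) (Hv_norm v)"
    have Tv: "\<And>g. g \<in> X \<Longrightarrow> T g \<in> Hv v" using bo unfolding bounded_op_def by blast
    obtain CT where CT: "\<forall>g\<in>X. Hv_norm v (T g) \<le> CT * nX g" using bo unfolding bounded_op_def by blast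
    define L where "L g z = complex_of_real (v z) * T g z" for g z
    have T0: "T f \<in> Hv0 v" if fX: "f \<in> X" for f
    proof -
      have "(L f \<longlongrightarrow> 0) (filtercomap norm (at_left 1))"
      proof (rule bdry_key[OF ini refl fX dX[OF fX] dN[OF fX]])
        show "\<forall>g1\<in>X. \<forall>g2\<in>X. \<forall>z\<in>disk. L (\<lambda>w. g1 w + g2 w) z = L g1 z + L g2 z"
          unfolding L_def using Tadd by (simp add: distrib_left)
        show "\<forall>c. \<forall>g\<in>X. \<forall>z\<in>disk. L (\<lambda>w. c * g w) z = c * L g z"
          unfolding L_def using Tsc by (simp add: algebra_simps)
        show "\<exists>K. \<forall>g\<in>X. \<forall>z\<in>disk. norm (L g z) \<le> K * nX g"
        proof (intro exI ballI)
          fix g z assume g: "g \<in> X" and z: "z \<in> disk"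
          have "norm (L g z) = v z * norm (T g z)" unfolding L_def
            using tw_facts(2)[OF tw z] by (simp add: norm_mult)
          also have "\<dots> \<le> Hv_norm v (T g)" by (rule hv_bound[OF Tv[OF g] z])
          also have "\<dots> \<le> CT * nX g" using CT g by blast
          finally show "norm (L g z) \<le> CT * nX g" .
        qed
        show "\<forall>r. 0 \<le> r \<and> r < 1 \<longrightarrow> (L (dil r f) \<longlongrightarrow> 0) (filtercomap norm (at_left 1))"
        proof (intro allI impI)
          fix r :: real assume r: "0 \<le> r \<and> r < 1"
          have "T (dil r f) \<in> Hv0 v" using hyp fX r by blast
          then have "((\<lambda>z. v z * norm (T (dil r f) z)) \<longlongrightarrow> 0) (filtercomap norm (at_left 1))"
            unfolding Hv0_def by blast
          then show "(L (dil r f) \<longlongrightarrow> 0) (filtercomap norm (at_left 1))"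
            unfolding L_def using conv_norm[OF tw] by blast
        qed
      qed
      then have "((\<lambda>z. v z * norm (T f z)) \<longlongrightarrow> 0) (filtercomap norm (at_left 1))"
        unfolding L_def using conv_norm[OF tw] by blast
      then show ?thesis unfolding Hv0_def using TH[OF fX] by blast
    qed
    show "bounded_op X nX T (Hv0 v) (Hv_norm v)"
      unfolding bounded_op_def using T0 CT by blast
  next
    assume bo: "bounded_op X nX T (Hv0 v) (Hv_norm v)"
    then show "bounded_op X nX T (Hv v) (Hv_norm v)"
      unfolding bounded_op_def using Hv0_sub[OF tw] by blast
  qed
  have partB: "bounded_op X nX T (Bv v) (Bv_norm v) \<longleftrightarrow> bounded_op X nX T (Bv0 v) (Bv_norm v)"
    if hyp: "\<forall>f\<in>X. \<forall>r::real. 0 \<le> r \<and> r < 1 \<longrightarrow> T (dil r f) \<in> Bv0 v"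
  proof
    assume bo: "bounded_op X nX T (Bv v) (Bv_norm v)"
    have Tv: "\<And>g. g \<in> X \<Longrightarrow> T g \<in> Bv v" using bo unfolding bounded_op_def by blast
    obtain CT where CT: "\<forall>g\<in>X. Bv_norm v (T g) \<le> CT * nX g" using bo unfolding bounded_op_def by blast
    define L where "L g z = complex_of_real (v z) * deriv (T g) z" for g z
    have T0: "T f \<in> Bv0 v" if fX: "f \<in> X" for f
    proof -
      have "(L f \<longlongrightarrow> 0) (filtercomap norm (at_left 1))"
      proof (rule bdry_key[OF ini refl fX dX[OF fX] dN[OF fX]])
        show "\<forall>g1\<in>X. \<forall>g2\<in>X. \<forall>z\<in>disk. L (\<lambda>w. g1 w + g2 w) z = L g1 z + L g2 z"
        proof (intro ballI)
          fix g1 g2 z assume a: "g1 \<in> X" "g2 \<in> X" "z \<in> disk"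
          have "deriv (T (\<lambda>w. g1 w + g2 w)) z = deriv (\<lambda>w. T g1 w + T g2 w) z"
            using Tadd[OF a(1,2)] by simp
          also have "\<dots> = deriv (T g1) z + deriv (T g2) z"
            by (rule deriv_add[OF HD_cont(3)[OF TH[OF a(1)] a(3)] HD_cont(3)[OF TH[OF a(2)] a(3)]])
          finally show "L (\<lambda>w. g1 w + g2 w) z = L g1 z + L g2 z"
            unfolding L_def by (simp add: distrib_left)
        qed
        show "\<forall>c. \<forall>g\<in>X. \<forall>z\<in>disk. L (\<lambda>w. c * g w) z = c * L g z"
        proof (intro allI ballI)
          fix c g z assume a: "g \<in> X" "z \<in> disk"
          have "deriv (T (\<lambda>w. c * g w)) z = deriv (\<lambda>w. c * T g w) z"
            using Tsc[OF a(1)] by simp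
          also have "\<dots> = c * deriv (T g) z"
            by (rule deriv_cmult[OF HD_cont(3)[OF TH[OF a(1)] a(2)]])
          finally show "L (\<lambda>w. c * g w) z = c * L g z"
            unfolding L_def by (simp add: algebra_simps)
        qed
        show "\<exists>K. \<forall>g\<in>X. \<forall>z\<in>disk. norm (L g z) \<le> K * nX g"
        proof (intro exI ballI)
          fix g z assume g: "g \<in> X" and z: "z \<in> disk"
          have "norm (L g z) = v z * norm (deriv (T g) z)" unfolding L_def
            using tw_facts(2)[OF tw z] by (simp add: norm_mult)
          also have "\<dots> \<le> Bv_norm v (T g)" by (rule bv_bound[OF Tv[OF g] z])
          also have "\<dots> \<le> CT * nX g" using CT g by blast
          finally show "norm (L g z) \<le> CT * nX g" .
        qed
        show "\<forall>r. 0 \<le> r \<and> r < 1 \<longrightarrow> (L (dil r f) \<longlongrightarrow> 0) (filtercomap norm (at_left 1))"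
        proof (intro allI impI)
          fix r :: real assume r: "0 \<le> r \<and> r < 1"
          have "T (dil r f) \<in> Bv0 v" using hyp fX r by blast
          then have "((\<lambda>z. v z * norm (deriv (T (dil r f)) z)) \<longlongrightarrow> 0) (filtercomap norm (at_left 1))"
            unfolding Bv0_def by blast
          then show "(L (dil r f) \<longlongrightarrow> 0) (filtercomap norm (at_left 1))"
            unfolding L_def using conv_norm[OF tw] by blast
        qed
      qed
      then have "((\<lambda>z. v z * norm (deriv (T f) z)) \<longlongrightarrow> 0) (filtercomap norm (at_left 1))"
        unfolding L_def using conv_norm[OF tw] by blast
      then show ?thesis unfolding Bv0_def using TH[OF fX] by blast
    qed
    show "bounded_op X nX T (Bv0 v) (Bv_norm v)"
      unfolding bounded_op_def using T0 CT by blast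
  next
    assume bo: "bounded_op X nX T (Bv0 v) (Bv_norm v)"
    then show "bounded_op X nX T (Bv v) (Bv_norm v)"
      unfolding bounded_op_def using Bv0_sub[OF tw] by blast
  qed
  show ?thesis using partA partB by blast
qed

end
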